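(* Let $f:\mathbb{S}^1\to\mathbb{S}^1$ be an orientation-preserving homeomorphism with irrational Poincaré rotation number whose non-wandering set $\mathrm{NW}(f)$ is homeomorphic to a Cantor set. Then $h_{\mathrm{pol}}(C(f))\ge 2$.
   Context: A point $p$ is wandering for $f$ if it has a neighbourhood $U$ with $f^n(U)\cap U=\emptyset$ for all $n\ge1$; $\mathrm{NW}(f)$ is the set of points that are not wandering. $C(\mathbb{S}^1)$ is the set of all nonempty closed connected subsets of $\mathbb{S}^1$ with the Hausdorff metric $d_H(A,B)=\inf\{\varepsilon>0: A\subset U(B,\varepsilon),\ B\subset U(A,\varepsilon)\}$, $U(A,\varepsilon)=\{x: d(x,A)<\varepsilon\}$; $C(f)(A)=f(A)$. For a continuous map $g:Z\to Z$ of a compact metric space $(Z,\rho)$, define $\rho^g_n(x,y)=\max_{0\le k\le n-1}\rho(g^k(x),g^k(y))$; a finite set $E\subset Z$ is $(n,\varepsilon)$-separated if $\rho^g_n(x,y)\ge\varepsilon$ for all distinct $x,y\in E$; $\mathrm{sep}(n,\varepsilon)$ is the maximal cardinality of such a set; and $h_{\mathrm{pol}}(g)=\lim_{\varepsilon\to0}\limsup_{n\to\infty}\frac{\log \mathrm{sep}(n,\varepsilon)}{\log n}$. *)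

theory Defs
  imports "HOL-Analysis.Analysis"
begin

definition S1 :: "complex set" where
  "S1 = sphere 0 1"

text \<open>Lift of a circle map, via the covering map t to cis (2 pi t).
  An orientation-preserving homeomorphism is one admitting a continuous, strictly
  increasing lift F with F(x+1) = F(x)+1.\<close>
definition poincare_lift :: "(complex \<Rightarrow> complex) \<Rightarrow> (real \<Rightarrow> real) \<Rightarrow> bool" where
  "poincare_lift f F \<longleftrightarrow> continuous_on UNIV F \<and> strict_mono F \<and>
     (\<forall>x. F (x + 1) = F x + 1) \<and> (\<forall>x. f (cis (2 * pi * x)) = cis (2 * pi * F x))"

definition orientation_preserving :: "(complex \<Rightarrow> complex) \<Rightarrow> bool" where
  "orientation_preserving f \<longleftrightarrow> (\<exists>F. poincare_lift f F)"

definition rotation_number :: "(complex \<Rightarrow> complex) \<Rightarrow> real" where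
  "rotation_number f = frac (lim (\<lambda>n. (((SOME F. poincare_lift f F) ^^ n) 0) / real n))"

definition nonwandering :: "'a::topological_space set \<Rightarrow> ('a \<Rightarrow> 'a) \<Rightarrow> 'a set" where
  "nonwandering S f = {p \<in> S. \<forall>U. openin (top_of_set S) U \<and> p \<in> U \<longrightarrow>
       (\<exists>n\<ge>1. (f ^^ n) ` U \<inter> U \<noteq> {})}"

definition cantor_set :: "real set" where
  "cantor_set = {x. \<exists>d::nat \<Rightarrow> nat. (\<forall>n. d n \<in> {0, 2}) \<and>
                     x = (\<Sum>n. real (d n) / 3 ^ Suc n)}"

definition nbhd :: "'a::metric_space set \<Rightarrow> real \<Rightarrow> 'a set" where
  "nbhd A e = {x. infdist x A < e}"

definition hausdorff_dist :: "'a::metric_space set \<Rightarrow> 'a set \<Rightarrow> real" where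
  "hausdorff_dist A B = Inf {e. e > 0 \<and> A \<subseteq> nbhd B e \<and> B \<subseteq> nbhd A e}"

definition CS1 :: "complex set set" where
  "CS1 = {A. A \<subseteq> S1 \<and> A \<noteq> {} \<and> closed A \<and> connected A}"

definition Cmap :: "(complex \<Rightarrow> complex) \<Rightarrow> complex set \<Rightarrow> complex set" where
  "Cmap f A = f ` A"

definition dyn_dist :: "('a \<Rightarrow> 'a \<Rightarrow> real) \<Rightarrow> ('a \<Rightarrow> 'a) \<Rightarrow> nat \<Rightarrow> 'a \<Rightarrow> 'a \<Rightarrow> real" where
  "dyn_dist \<rho> g n x y = Max (insert 0 ((\<lambda>k. \<rho> ((g ^^ k) x) ((g ^^ k) y)) ` {..<n}))"

definition separated_set ::
  "'a set \<Rightarrow> ('a \<Rightarrow> 'a \<Rightarrow> real) \<Rightarrow> ('a \<Rightarrow> 'a) \<Rightarrow> nat \<Rightarrow> real \<Rightarrow> 'a set \<Rightarrow> bool" where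
  "separated_set Z \<rho> g n e E \<longleftrightarrow> finite E \<and> E \<subseteq> Z \<and>
     (\<forall>x\<in>E. \<forall>y\<in>E. x \<noteq> y \<longrightarrow> dyn_dist \<rho> g n x y \<ge> e)"

definition sep_num :: "'a set \<Rightarrow> ('a \<Rightarrow> 'a \<Rightarrow> real) \<Rightarrow> ('a \<Rightarrow> 'a) \<Rightarrow> nat \<Rightarrow> real \<Rightarrow> nat" where
  "sep_num Z \<rho> g n e = Sup (card ` {E. separated_set Z \<rho> g n e E})"

definition h_pol :: "'a set \<Rightarrow> ('a \<Rightarrow> 'a \<Rightarrow> real) \<Rightarrow> ('a \<Rightarrow> 'a) \<Rightarrow> ereal" where
  "h_pol Z \<rho> g = Lim (at_right 0)
     (\<lambda>e. limsup (\<lambda>n. ereal (ln (real (sep_num Z \<rho> g n e)) / ln (real n))))"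

end

theory Submission
  imports Defs "HOL-Real_Asymp.Real_Asymp"
begin


lemma cis_dist2: "(cmod (cis a - cis b))^2 = 2 - 2 * cos (a - b)"
proof -
  have "(cmod (cis a - cis b))^2 = (cos a - cos b)^2 + (sin a - sin b)^2"
    by (simp add: cmod_power2)
  also have "\<dots> = (sin a ^2 + cos a ^2) + (sin b^2 + cos b^2) - 2 * (cos a * cos b + sin a * sin b)"
    by (simp add: power2_eq_square algebra_simps)
  also have "\<dots> = 2 - 2 * cos (a - b)" by (simp add: cos_diff)
  finally show ?thesis .
qed

lemma cos_quasi:
  fixes u1 u u2 :: real
  assumes "0 \<le> u1" "u1 \<le> u" "u \<le> u2" "u2 \<le> 1"
  shows "cos (2*pi*u) \<le> max (cos (2*pi*u1)) (cos (2*pi*u2))"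
proof (cases "u \<le> 1/2")
  case True
  have "cos (2*pi*u) \<le> cos (2*pi*u1)"
    by (rule cos_monotone_0_pi_le) (use assms True in auto)
  then show ?thesis by auto
next
  case False
  have "cos (2*pi*(1-u)) \<le> cos (2*pi*(1-u2))"
    by (rule cos_monotone_0_pi_le) (use assms False in \<open>auto simp: algebra_simps\<close>)
  moreover have "cos (2*pi*(1-u)) = cos (2*pi*u)" "cos (2*pi*(1-u2)) = cos (2*pi*u2)"
    using cos_2pi_minus[of "2*pi*u"] cos_2pi_minus[of "2*pi*u2"] by (simp_all add: algebra_simps)
  ultimately show ?thesis by auto
qed

lemma far_quasi:
  fixes a u1 u u2 \<rho> :: real
  assumes "a \<le> u1" "u1 \<le> u" "u \<le> u2" "u2 \<le> a + 1" "0 < \<rho>"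
    and "\<rho> \<le> dist (cis (2*pi*a)) (cis (2*pi*u1))"
    and "\<rho> \<le> dist (cis (2*pi*a)) (cis (2*pi*u2))"
  shows "\<rho> \<le> dist (cis (2*pi*a)) (cis (2*pi*u))"
proof -
  have d: "(dist (cis (2*pi*a)) (cis (2*pi* v)))^2 = 2 - 2 * cos (2*pi*(v - a))" for v
  proof -
    have "(dist (cis (2*pi*a)) (cis (2*pi* v)))^2 = 2 - 2 * cos (2*pi*a - 2*pi* v)"
      by (simp add: dist_norm cis_dist2)
    also have "cos (2*pi*a - 2*pi* v) = cos (2*pi*(v - a))"
      by (metis cos_minus minus_diff_eq right_diff_distrib)
    finally show ?thesis .
  qed
  have "cos (2*pi*(u-a)) \<le> max (cos (2*pi*(u1-a))) (cos (2*pi*(u2-a)))"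
    by (rule cos_quasi) (use assms in auto)
  then have "(dist (cis (2*pi*a)) (cis (2*pi*u)))^2 \<ge> min ((dist (cis (2*pi*a)) (cis (2*pi*u1)))^2) ((dist (cis (2*pi*a)) (cis (2*pi*u2)))^2)"
    unfolding d by auto
  moreover have "\<rho>^2 \<le> (dist (cis (2*pi*a)) (cis (2*pi*u1)))^2" "\<rho>^2 \<le> (dist (cis (2*pi*a)) (cis (2*pi*u2)))^2"
    using assms by (auto intro!: power_mono)
  ultimately have "\<rho>^2 \<le> (dist (cis (2*pi*a)) (cis (2*pi*u)))^2" by linarith
  then show ?thesis by (rule power2_le_imp_le) simp
qed

lemma cis_in_S1: "cis t \<in> S1" by (simp add: S1_def)

lemma S1_cis:
  assumes "z \<in> S1"
  obtains t where "0 \<le> t" "t < 1" "z = cis (2*pi*t)"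
proof -
  have nz: "norm z = 1" using assms by (simp add: S1_def)
  have "z = of_real (norm z) * exp (\<i> * of_real (Arg2pi z))"
    using Arg2pi[of z] by (simp add: is_Arg_def)
  then have "z = cis (2*pi*(Arg2pi z / (2*pi)))" by (simp add: nz cis_conv_exp)
  moreover have "0 \<le> Arg2pi z / (2*pi)" "Arg2pi z / (2*pi) < 1" using Arg2pi[of z] by auto
  ultimately show ?thesis using that by blast
qed

lemma cantor_sum_bound:
  assumes d: "\<And>n. d n \<in> {0, 2::nat}"
  shows "(\<Sum>n. real (d n) / 3 ^ Suc n) \<le> 1/3 \<or> (\<Sum>n. real (d n) / 3 ^ Suc n) \<ge> 2/3"
proof -
  have g: "(\<lambda>n. (1/3::real)^n) sums (3/2)" using geometric_sums[of "1/3::real"] by simp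
  have g2: "(\<lambda>n. 2/9 * (1/3::real)^n) sums (1/3)" using sums_mult[OF g, of "2/9"] by simp
  have le: "real (d (Suc n)) / 3 ^ Suc (Suc n) \<le> 2/9 * (1/3::real)^n" for n
  proof -
    have "real (d (Suc n)) \<le> 2" using d[of "Suc n"] by auto
    then have "real (d (Suc n)) / 3 ^ Suc (Suc n) \<le> 2 / 3 ^ Suc (Suc n)" by (simp add: divide_right_mono)
    also have "\<dots> = 2/9 * (1/3::real)^n" by (simp add: power_divide)
    finally show ?thesis .
  qed
  have nn: "0 \<le> real (d (Suc n)) / 3 ^ Suc (Suc n)" for n by simp
  have sm: "summable (\<lambda>n. real (d (Suc n)) / 3 ^ Suc (Suc n))"
    by (rule summable_comparison_test[of _ "\<lambda>n. 2/9 * (1/3::real)^n"]) (use le g2 in \<open>auto simp: sums_iff\<close>)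
  have t_le: "(\<Sum>n. real (d (Suc n)) / 3 ^ Suc (Suc n)) \<le> 1/3"
    using suminf_le[OF le sm] g2 by (simp add: sums_iff)
  have t_ge: "0 \<le> (\<Sum>n. real (d (Suc n)) / 3 ^ Suc (Suc n))" using suminf_nonneg[OF sm nn] .
  have sm0: "summable (\<lambda>n. real (d n) / 3 ^ Suc n)"
    using sm by (subst summable_Suc_iff[symmetric]) simp
  have "(\<Sum>n. real (d n) / 3 ^ Suc n) = real (d 0) / 3 + (\<Sum>n. real (d (Suc n)) / 3 ^ Suc (Suc n))"
    using suminf_split_head[OF sm0] by simp
  then show ?thesis using d[of 0] t_le t_ge by auto
qed

lemma cantor_not_connected: "\<not> connected cantor_set"
proof
  assume c: "connected cantor_set"
  have "0 \<in> cantor_set" unfolding cantor_set_def by (rule CollectI, rule exI[of _ "\<lambda>_. 0"]) simp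
  moreover have "1 \<in> cantor_set"
  proof -
    have g: "(\<lambda>n. (1/3::real)^n) sums (3/2)" using geometric_sums[of "1/3::real"] by simp
    have "(\<lambda>n. 2/3 * (1/3::real)^n) sums 1" using sums_mult[OF g, of "2/3"] by simp
    then have "(\<Sum>n. real ((\<lambda>_. 2::nat) n) / 3 ^ Suc n) = 1"
      by (simp add: sums_iff power_divide)
    then show ?thesis unfolding cantor_set_def by (intro CollectI exI[of _ "\<lambda>_. 2::nat"]) simp
  qed
  ultimately have h01: "0 \<in> cantor_set" "1 \<in> cantor_set" by auto
  have "is_interval cantor_set" using c is_interval_connected_1 by blast
  then have "\<forall>a\<in>cantor_set. \<forall>b\<in>cantor_set. \<forall>x. a \<le> x \<and> x \<le> b \<longrightarrow> x \<in> cantor_set"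
    unfolding is_interval_1 .
  then have "0 \<le> (1/2::real) \<and> 1/2 \<le> (1::real) \<longrightarrow> 1/2 \<in> cantor_set" using h01 by blast
  then have "1/2 \<in> cantor_set" by simp
  then obtain d :: "nat \<Rightarrow> nat" where d: "\<forall>n. d n \<in> {0, 2}" and eq: "1/2 = (\<Sum>n. real (d n) / 3 ^ Suc n)"
    unfolding cantor_set_def by blast
  have "(\<Sum>n. real (d n) / 3 ^ Suc n) \<le> 1/3 \<or> (\<Sum>n. real (d n) / 3 ^ Suc n) \<ge> 2/3"
    by (rule cantor_sum_bound) (use d in blast)
  then show False using eq by linarith
qed



lemma lift_iter:
  assumes "poincare_lift f F"
  shows "(f^^l) (cis (2* pi* s)) = cis (2* pi*((F^^l) s))"
  using assms by (induction l) (auto simp: poincare_lift_def)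

lemma lift_iter_shift:
  assumes "poincare_lift f F"
  shows "(F^^l) (x+1) = (F^^l) x + 1"
  using assms by (induction l arbitrary: x) (auto simp: poincare_lift_def)

lemma lift_iter_mono:
  assumes "poincare_lift f F" "x \<le> y"
  shows "(F^^l) x \<le> (F^^l) y"
  using assms(2)
proof (induction l)
  case 0 then show ?case by simp
next
  case (Suc l)
  have "strict_mono F" using assms(1) by (simp add: poincare_lift_def)
  then show ?case using Suc by (simp add: strict_mono_less_eq)
qed

lemma iter_S1:
  assumes "f ` S1 \<subseteq> S1" "z \<in> S1"
  shows "(f^^n) z \<in> S1"
  using assms by (induction n) auto

lemma iter_inv:
  assumes "\<forall>y\<in>S1. f (g y) = y" "g ` S1 \<subseteq> S1" "z \<in> S1"
  shows "(f^^n) ((g^^n) z) = z"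
proof (induction n)
  case 0 then show ?case by simp
next
  case (Suc n)
  have "(g^^n) z \<in> S1" using iter_S1[OF assms(2,3)] .
  then have fg: "f ((g^^Suc n) z) = (g^^n) z" using assms(1) by simp
  have "(f^^Suc n) ((g^^Suc n) z) = (f^^n) (f ((g^^Suc n) z))"
    by (simp only: funpow_Suc_right o_apply)
  then have "(f^^Suc n) ((g^^Suc n) z) = (f^^n) ((g^^n) z)" using fg by simp
  then show ?case using Suc by simp
qed

lemma Cmap_iter: "(Cmap f ^^ k) A = (f^^k) ` A"
  by (induction k) (auto simp: Cmap_def image_comp)

lemma hd_sym: "hausdorff_dist A B = hausdorff_dist B A"
  unfolding hausdorff_dist_def by (simp add: conj_commute)

lemma S1_dist_le2: "a \<in> S1 \<Longrightarrow> b \<in> S1 \<Longrightarrow> dist a b \<le> 2"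
  unfolding S1_def dist_norm using norm_triangle_ineq4[of a b] by simp

lemma hd_lower:
  assumes "B \<subseteq> S1" "B' \<subseteq> S1" "B' \<noteq> {}" "x \<in> B" "\<forall>z\<in>B'. r \<le> dist x z"
  shows "r \<le> hausdorff_dist B B'"
  unfolding hausdorff_dist_def
proof (rule cInf_greatest)
  have a: "infdist b C < 3" if "b \<in> S1" "C \<subseteq> S1" "C \<noteq> {}" for b C
  proof -
    obtain c where "c \<in> C" using \<open>C \<noteq> {}\<close> by blast
    then have "infdist b C \<le> dist b c" by (rule infdist_le)
    also have "\<dots> \<le> 2" using S1_dist_le2 that \<open>c \<in> C\<close> by auto
    finally show ?thesis by simp
  qed
  have "B \<subseteq> nbhd B' 3" "B' \<subseteq> nbhd B 3" using a assms unfolding nbhd_def by blast+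
  then show "{e. e > 0 \<and> B \<subseteq> nbhd B' e \<and> B' \<subseteq> nbhd B e} \<noteq> {}" by auto
next
  fix e assume "e \<in> {e. e > 0 \<and> B \<subseteq> nbhd B' e \<and> B' \<subseteq> nbhd B e}"
  then have "infdist x B' < e" using assms(4) unfolding nbhd_def by auto
  moreover have "r \<le> infdist x B'"
    using assms(3,5) by (simp add: infdist_notempty cINF_greatest)
  ultimately show "r \<le> e" by simp
qed

lemma hd_upper:
  assumes "\<forall>b\<in>B. infdist b B' < e" "\<forall>b\<in>B'. infdist b B < e" "e > 0"
  shows "hausdorff_dist B B' \<le> e"
  unfolding hausdorff_dist_def
  by (rule cInf_lower) (use assms in \<open>auto simp: nbhd_def bdd_below_def intro!: exI[of _ 0]\<close>)

lemma sep_card_bound: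
  assumes fS: "f ` S1 \<subseteq> S1" and e: "e > 0"
  shows "\<exists>M. \<forall>E. separated_set CS1 hausdorff_dist (Cmap f) n e E \<longrightarrow> card E \<le> M"
proof -
  define \<delta> where "\<delta> = e/3"
  have \<delta>: "\<delta> > 0" using e by (simp add: \<delta>_def)
  have "compact S1" by (simp add: S1_def)
  then obtain N where N: "N \<subseteq> S1" "finite N" "S1 \<subseteq> (\<Union>p\<in>N. ball p \<delta>)"
    by (rule compactE_image[of S1 S1 "\<lambda>p. ball p \<delta>"]) (use \<delta> in auto)
  define code where "code A = (\<lambda>k\<in>{..<n}. {p\<in>N. infdist p ((f^^k) ` A) < \<delta>})" for A
  define P where "P = PiE {..<n} (\<lambda>_. Pow N)"
  have finP: "finite P" unfolding P_def using N(2) by (simp add: finite_PiE)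
  have codeP: "code A \<in> P" for A unfolding code_def P_def by auto
  show ?thesis
  proof (intro exI allI impI)
    fix E assume sep: "separated_set CS1 hausdorff_dist (Cmap f) n e E"
    have inj: "inj_on code E"
    proof (rule inj_onI, rule ccontr)
      fix A A' assume A: "A \<in> E" "A' \<in> E" "code A = code A'" "A \<noteq> A'"
      then have ge: "dyn_dist hausdorff_dist (Cmap f) n A A' \<ge> e" using sep unfolding separated_set_def by blast
      have AS: "A \<subseteq> S1" "A' \<subseteq> S1" using A(1,2) sep unfolding separated_set_def CS1_def by auto
      have close: "hausdorff_dist ((f^^k) ` A) ((f^^k) ` A') < e" if k: "k < n" for k
      proof -
        have main: "infdist b ((f^^k) ` C') < 2*\<delta>"
          if "b \<in> (f^^k) ` C" "C \<subseteq> S1" "code C = code C'" for b C C'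
        proof -
          have "b \<in> S1" using that iter_S1[OF fS] by auto
          then obtain p where p: "p \<in> N" "dist p b < \<delta>" using N(3) by auto
          have "infdist p ((f^^k) ` C) \<le> dist p b" using that(1) by (rule infdist_le)
          then have "p \<in> code C k" using p k unfolding code_def by auto
          then have "p \<in> code C' k" using that(3) by simp
          then have "infdist p ((f^^k) ` C') < \<delta>" using k unfolding code_def by auto
          moreover have "infdist b ((f^^k) ` C') \<le> infdist p ((f^^k) ` C') + dist b p"
            by (rule infdist_triangle)
          ultimately show ?thesis using p(2) by (simp add: dist_commute)
        qed
        have "2*\<delta> < 5* e/6" using e unfolding \<delta>_def by simp
        then have m1: "\<forall>b\<in>(f^^k) ` A. infdist b ((f^^k) ` A') < 5* e/6"
          and m2: "\<forall>b\<in>(f^^k) ` A'. infdist b ((f^^k) ` A) < 5* e/6"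
          using main[of _ A A'] main[of _ A' A] AS A(3) by fastforce+
        have "hausdorff_dist ((f^^k) ` A) ((f^^k) ` A') \<le> 5* e/6"
          by (rule hd_upper[OF m1 m2]) (use e in simp)
        then show ?thesis using e by simp
      qed
      have "dyn_dist hausdorff_dist (Cmap f) n A A' < e"
        unfolding dyn_dist_def using close e by (simp add: Cmap_iter Max_less_iff)
      then show False using ge by simp
    qed
    have "card E \<le> card P" by (rule card_inj_on_le[OF inj]) (use codeP finP in auto)
    then show "card E \<le> card P" .
  qed
qed

lemma sep_bdd:
  assumes "f ` S1 \<subseteq> S1" "e > 0"
  shows "bdd_above (card ` {E. separated_set CS1 hausdorff_dist (Cmap f) n e E})"
proof -
  obtain M where M: "\<forall>E. separated_set CS1 hausdorff_dist (Cmap f) n e E \<longrightarrow> card E \<le> M"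
    using sep_card_bound[OF assms, of n] by blast
  show ?thesis
  proof (rule bdd_aboveI[of _ M])
    fix x assume "x \<in> card ` {E. separated_set CS1 hausdorff_dist (Cmap f) n e E}"
    then obtain E where "separated_set CS1 hausdorff_dist (Cmap f) n e E" "x = card E" by blast
    then show "x \<le> M" using M by simp
  qed
qed

lemma sep_empty: "separated_set Z \<rho> g n e {}"
  unfolding separated_set_def by simp

lemma sep_num_ge:
  assumes "f ` S1 \<subseteq> S1" "e > 0" "separated_set CS1 hausdorff_dist (Cmap f) n e E"
  shows "card E \<le> sep_num CS1 hausdorff_dist (Cmap f) n e"
  unfolding sep_num_def
proof (rule cSup_upper)
  show "card E \<in> card ` {E. separated_set CS1 hausdorff_dist (Cmap f) n e E}"
    using assms(3) by (intro imageI) simp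
  show "bdd_above (card ` {E. separated_set CS1 hausdorff_dist (Cmap f) n e E})"
    by (rule sep_bdd[OF assms(1,2)])
qed

lemma sep_mono_e:
  assumes "e' \<le> e" "separated_set Z \<rho> g n e E"
  shows "separated_set Z \<rho> g n e' E"
  using assms unfolding separated_set_def by (meson order_trans)

lemma sep_num_mono:
  assumes "f ` S1 \<subseteq> S1" "0 < e'" "e' \<le> e"
  shows "sep_num CS1 hausdorff_dist (Cmap f) n e \<le> sep_num CS1 hausdorff_dist (Cmap f) n e'"
  unfolding sep_num_def
proof (rule cSup_subset_mono)
  show "card ` {E. separated_set CS1 hausdorff_dist (Cmap f) n e E} \<noteq> {}"
    using sep_empty[of CS1 hausdorff_dist "Cmap f" n e] by blast
  show "bdd_above (card ` {E. separated_set CS1 hausdorff_dist (Cmap f) n e' E})"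
    by (rule sep_bdd) (use assms in auto)
  show "card ` {E. separated_set CS1 hausdorff_dist (Cmap f) n e E}
    \<subseteq> card ` {E. separated_set CS1 hausdorff_dist (Cmap f) n e' E}"
    by (rule image_mono) (use sep_mono_e[OF assms(3)] in blast)
qed

lemma ln_nat_nonneg: "0 \<le> ln (real (n::nat))"
  by (cases "n = 0") auto

lemma ln_nat_mono: "(a::nat) \<le> b \<Longrightarrow> ln (real a) \<le> ln (real b)"
  by (cases "a = 0") (auto simp: ln_nat_nonneg)

lemma Lim_antitone_ge:
  fixes \<phi> :: "real \<Rightarrow> ereal"
  assumes mono: "\<And>e e'. 0 < e' \<Longrightarrow> e' \<le> e \<Longrightarrow> \<phi> e \<le> \<phi> e'" and e0: "0 < e0" and ge: "c \<le> \<phi> e0"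
  shows "c \<le> Lim (at_right 0) \<phi>"
proof -
  define L where "L = (SUP e\<in>{0<..}. \<phi> e)"
  have "(\<phi> \<longlongrightarrow> L) (at_right 0)"
  proof (rule order_tendstoI)
    fix a assume "a < L"
    then obtain e1 where e1: "e1 \<in> {0<..}" "a < \<phi> e1" by (auto simp: L_def less_SUP_iff)
    show "eventually (\<lambda>e. a < \<phi> e) (at_right 0)"
      unfolding eventually_at_right_field
    proof (intro exI[of _ e1] conjI allI impI)
      show "0 < e1" using e1 by simp
      fix y :: real assume "0 < y" "y < e1"
      then have "\<phi> e1 \<le> \<phi> y" using mono by simp
      then show "a < \<phi> y" using e1(2) by (rule less_le_trans[rotated])
    qed
  next
    fix a assume "L < a"
    have "\<phi> y \<le> L" if "y > 0" for y unfolding L_def by (rule SUP_upper) (use that in auto)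
    then show "eventually (\<lambda>e. \<phi> e < a) (at_right 0)"
      unfolding eventually_at_right_field
    proof (intro exI[of _ 1] conjI allI impI)
      fix y :: real assume "0 < y" "y < 1"
      then have "\<phi> y \<le> L" using \<open>\<And>y. 0 < y \<Longrightarrow> \<phi> y \<le> L\<close> by simp
      then show "\<phi> y < a" using \<open>L < a\<close> by (rule le_less_trans)
    qed simp
  qed
  then have "Lim (at_right 0) \<phi> = L" by (rule tendsto_Lim[OF trivial_limit_at_right_real])
  moreover have "\<phi> e0 \<le> L" unfolding L_def by (rule SUP_upper) (use e0 in auto)
  ultimately show ?thesis using ge by auto
qed

lemma limsup_ge2:
  fixes s :: "nat \<Rightarrow> nat"
  assumes "\<And>n. n \<ge> 2 \<Longrightarrow> real n * (real n - 1) / 2 \<le> real (s n)"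
  shows "2 \<le> limsup (\<lambda>n. ereal (ln (real (s n)) / ln (real n)))"
proof -
  have t: "(\<lambda>n. ln (real n * (real n - 1)/2) / ln (real n)) \<longlonglongrightarrow> 2" by real_asymp
  have "limsup (\<lambda>n. ereal (ln (real n * (real n - 1)/2) / ln (real n))) = 2"
    by (rule lim_imp_Limsup) (use tendsto_ereal[OF t] in auto)
  moreover have "limsup (\<lambda>n. ereal (ln (real n * (real n - 1)/2) / ln (real n)))
      \<le> limsup (\<lambda>n. ereal (ln (real (s n)) / ln (real n)))"
  proof (rule Limsup_mono, rule eventually_sequentiallyI[of 2])
    fix n :: nat assume n: "2 \<le> n"
    have pos: "0 < real n * (real n - 1)/2" using n by simp
    have "ln (real n * (real n - 1)/2) \<le> ln (real (s n))"
      using assms[OF n] pos by (subst ln_le_cancel_iff) auto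
    moreover have "0 \<le> ln (real n)" using n by simp
    ultimately show "ereal (ln (real n * (real n - 1)/2) / ln (real n)) \<le> ereal (ln (real (s n)) / ln (real n))"
      by (simp add: divide_right_mono)
  qed
  ultimately show ?thesis by simp
qed



lemma P2_lemma:
  assumes F: "poincare_lift f F" and \<rho>: "0 < \<rho>"
    and ht: "\<And>l. 0 \<le> t l \<and> t l < 1"
    and pT: "cis (2 * pi * ((F^^l) (t l))) = p"
    and farT: "\<And>i. i \<noteq> l \<Longrightarrow> \<rho> \<le> dist p (cis (2 * pi * ((F^^l) (t i))))"
    and s: "t i \<le> s" "s \<le> t j" and nl: "\<not> (t i \<le> t l \<and> t l \<le> t j)"
  shows "\<rho> \<le> dist p ((f^^l) (cis (2 * pi * s)))"
proof -
  have il: "i \<noteq> l" using s nl by auto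
  have jl: "j \<noteq> l" using s nl by auto
  have m: "(F^^l) a \<le> (F^^l) b" if "a \<le> b" for a b using lift_iter_mono[OF F that] .
  have sh: "(F^^l) (x + 1) = (F^^l) x + 1" for x using lift_iter_shift[OF F] .
  have Fy: "(f^^l) (cis (2 * pi * s)) = cis (2 * pi * ((F^^l) s))" by (rule lift_iter[OF F])
  have mi: "(F^^l) (t i) \<le> (F^^l) s" using m s(1) .
  have mj: "(F^^l) s \<le> (F^^l) (t j)" using m s(2) .
  have fi: "\<rho> \<le> dist p (cis (2 * pi * ((F^^l) (t i))))" using farT il .
  have fj: "\<rho> \<le> dist p (cis (2 * pi * ((F^^l) (t j))))" using farT jl .
  have "t l < t i \<or> t j < t l" using nl s by linarith
  then obtain a where pa: "p = cis (2 * pi * a)" and a1: "a \<le> (F^^l) (t i)" and a2: "(F^^l) (t j) \<le> a + 1"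
  proof
    assume lt: "t l < t i"
    define a where "a = (F^^l) (t l)"
    have pa: "p = cis (2 * pi * a)" using pT a_def by simp
    have "t j \<le> t l + 1" using ht[of j] ht[of l] by linarith
    then have "(F^^l) (t j) \<le> (F^^l) (t l + 1)" by (rule m)
    then have a2: "(F^^l) (t j) \<le> a + 1" using sh[of "t l"] a_def by simp
    have a1: "a \<le> (F^^l) (t i)" unfolding a_def using lt by (intro m) simp
    show thesis by (rule that[OF pa a1 a2])
  next
    assume lt: "t j < t l"
    define a where "a = (F^^l) (t l) - 1"
    have "cis (2 * pi * a) = cis (2 * pi * ((F^^l) (t l)) - 2 * pi)"
      unfolding a_def by (simp add: right_diff_distrib)
    also have "\<dots> = cis (2 * pi * ((F^^l) (t l)))" by (simp add: cis_divide[symmetric])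
    finally have pa: "p = cis (2 * pi * a)" using pT by simp
    have "t l - 1 \<le> t i" using ht[of i] ht[of l] by linarith
    then have "(F^^l) (t l - 1) \<le> (F^^l) (t i)" by (rule m)
    moreover have "(F^^l) (t l - 1) = a" using sh[of "t l - 1"] a_def by simp
    ultimately have a1: "a \<le> (F^^l) (t i)" by simp
    have "(F^^l) (t j) \<le> (F^^l) (t l)" using lt by (intro m) simp
    then have a2: "(F^^l) (t j) \<le> a + 1" unfolding a_def by simp
    show thesis by (rule that[OF pa a1 a2])
  qed
  have "\<rho> \<le> dist (cis (2 * pi * a)) (cis (2 * pi * ((F^^l) s)))"
    by (rule far_quasi[OF a1 mi mj a2 \<rho>]) (use fi fj pa in simp_all)
  then show ?thesis using Fy pa by simp
qed
theorem corollary1: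
  fixes f g :: "complex \<Rightarrow> complex"
  assumes "homeomorphism S1 S1 f g"
    and "orientation_preserving f"
    and "rotation_number f \<notin> \<rat>"
    and "nonwandering S1 f homeomorphic cantor_set"
  shows "h_pol CS1 hausdorff_dist (Cmap f) \<ge> 2"
proof -
  have fS: "f ` S1 = S1" and fg: "\<forall>y\<in>S1. f (g y) = y" and gS: "g ` S1 = S1"
    using assms(1) unfolding homeomorphism_def by auto
  have fS': "f ` S1 \<subseteq> S1" and gS': "g ` S1 \<subseteq> S1" using fS gS by auto
  obtain F where F: "poincare_lift f F" using assms(2) orientation_preserving_def by blast
  have "nonwandering S1 f \<noteq> S1"
  proof
    assume "nonwandering S1 f = S1"
    then have "S1 homeomorphic cantor_set" using assms(4) by simp
    moreover have "connected S1" unfolding S1_def by (rule connected_sphere) simp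
    ultimately have "connected cantor_set" using homeomorphic_connectedness by blast
    then show False using cantor_not_connected by blast
  qed
  moreover have "nonwandering S1 f \<subseteq> S1" unfolding nonwandering_def by auto
  ultimately obtain p where pS: "p \<in> S1" and pNW: "p \<notin> nonwandering S1 f" by blast
  then obtain U where U: "openin (top_of_set S1) U" "p \<in> U"
    and wand: "\<And>n. n \<ge> 1 \<Longrightarrow> (f^^n) ` U \<inter> U = {}"
    unfolding nonwandering_def by auto
  obtain \<rho> where \<rho>: "\<rho> > 0" "ball p \<rho> \<inter> S1 \<subseteq> U" using U openin_contains_ball by meson
  have far: "\<rho> \<le> dist p z" if "z \<in> S1" "z \<notin> U" for z
  proof (rule ccontr)
    assume "\<not> \<rho> \<le> dist p z"
    then have "z \<in> ball p \<rho> \<inter> S1" using that by auto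
    then show False using \<rho>(2) that by auto
  qed
  define y where "y l = (g^^l) p" for l
  have yS: "y l \<in> S1" for l unfolding y_def using iter_S1[OF gS' pS] .
  have K1: "(f^^l) (y l) = p" for l unfolding y_def by (rule iter_inv[OF fg gS' pS])
  have K2: "(f^^l) (y i) \<notin> U" if "i \<noteq> l" for i l
  proof (cases "i < l")
    case True
    have "f^^l = f^^(l-i) \<circ> f^^i" using True by (simp add: funpow_add[symmetric])
    then have "(f^^l) (y i) = (f^^(l-i)) ((f^^i) (y i))" by simp
    also have "\<dots> = (f^^(l-i)) p" using K1 by simp
    finally have "(f^^l) (y i) \<in> (f^^(l-i)) ` U" using U(2) by auto
    moreover have "(f^^(l-i)) ` U \<inter> U = {}" using True by (intro wand) simp
    ultimately show ?thesis by blast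
  next
    case False
    then have il: "l < i" using that by simp
    define w where "w = (g^^(i-l)) p"
    have wS: "w \<in> S1" unfolding w_def using iter_S1[OF gS' pS] .
    have "g^^i = g^^l \<circ> g^^(i-l)" using il by (simp add: funpow_add[symmetric])
    then have "y i = (g^^l) w" unfolding y_def w_def by simp
    then have "(f^^l) (y i) = w" using iter_inv[OF fg gS' wS] by simp
    moreover have "w \<notin> U"
    proof
      assume "w \<in> U"
      have "(f^^(i-l)) w = p" unfolding w_def by (rule iter_inv[OF fg gS' pS])
      then have "p \<in> (f^^(i-l)) ` U" using \<open>w \<in> U\<close> by (metis image_eqI)
      moreover have "(f^^(i-l)) ` U \<inter> U = {}" using il by (intro wand) simp
      ultimately show False using U(2) by blast
    qed
    ultimately show ?thesis by simp
  qed
  define t where "t l = (SOME s. 0 \<le> s \<and> s < 1 \<and> y l = cis (2 * pi * s))" for l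
  have ht: "0 \<le> t l \<and> t l < 1 \<and> y l = cis (2 * pi * t l)" for l
  proof -
    obtain s where "0 \<le> s" "s < 1" "y l = cis (2 * pi * s)" using S1_cis[OF yS[of l]] .
    then have "0 \<le> s \<and> s < 1 \<and> y l = cis (2 * pi * s)" by simp
    then show ?thesis unfolding t_def by (rule someI[where P="\<lambda>s. 0 \<le> s \<and> s < 1 \<and> y l = cis (2 * pi * s)"])
  qed
  have tinj: "t i \<noteq> t l" if "i \<noteq> l" for i l
  proof
    assume "t i = t l"
    then have "y i = y l" using ht[of i] ht[of l] by simp
    then show False using K1[of l] K2[OF that] U(2) by simp
  qed
  have Fy: "(f^^l) (cis (2 * pi * s)) = cis (2 * pi * ((F^^l) s))" for l s
    by (rule lift_iter[OF F])
  have pT: "cis (2 * pi * ((F^^l) (t l))) = p" for l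
    using K1[of l] ht[of l] Fy by simp
  have farT: "\<rho> \<le> dist p (cis (2 * pi * ((F^^l) (t i))))" if "i \<noteq> l" for i l
  proof -
    have "cis (2 * pi * ((F^^l) (t i))) = (f^^l) (y i)" using ht[of i] Fy by simp
    moreover have "(f^^l) (y i) \<in> S1" using iter_S1[OF fS' yS] .
    ultimately show ?thesis using far K2[OF that] by simp
  qed
  have P2: "\<rho> \<le> dist p ((f^^l) (cis (2 * pi * s)))"
    if s: "t i \<le> s" "s \<le> t j" and nl: "\<not> (t i \<le> t l \<and> t l \<le> t j)" for i j l s
    by (rule P2_lemma[OF F \<rho>(1) _ pT farT s nl]) (use ht in blast)
  define arc where "arc q = (\<lambda>s. cis (2 * pi * s)) ` {t (fst q)..t (snd q)}" for q :: "nat \<times> nat"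
  define S where "S q = {l. t (fst q) \<le> t l \<and> t l \<le> t (snd q)}" for q :: "nat \<times> nat"
  define P where "P n = {q. fst q < n \<and> snd q < n \<and> t (fst q) < t (snd q)}" for n
  have contc: "continuous_on A (\<lambda>s::real. cis (2 * pi * s))" for A
    unfolding cis_conv_exp by (intro continuous_intros)
  have arcS: "arc q \<subseteq> S1" for q unfolding arc_def using cis_in_S1 by auto
  have arcNE: "arc q \<noteq> {}" if "t (fst q) \<le> t (snd q)" for q
    unfolding arc_def using that by auto
  have arcCS: "arc q \<in> CS1" if "t (fst q) \<le> t (snd q)" for q
  proof -
    have "compact (arc q)" unfolding arc_def by (rule compact_continuous_image[OF contc compact_Icc])
    moreover have "connected (arc q)" unfolding arc_def by (rule connected_continuous_image[OF contc connected_Icc])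
    ultimately show ?thesis unfolding CS1_def using arcS arcNE[OF that] compact_imp_closed by blast
  qed
  have P1: "p \<in> (f^^l) ` arc q" if "l \<in> S q" for l q
  proof -
    have "y l \<in> arc q" using that ht[of l] unfolding arc_def S_def by auto
    then show ?thesis using K1[of l] by (metis image_eqI)
  qed
  have P2': "\<forall>z\<in>(f^^l) ` arc q. \<rho> \<le> dist p z" if "l \<notin> S q" for l q
  proof
    fix z assume "z \<in> (f^^l) ` arc q"
    then obtain s where s: "t (fst q) \<le> s" "s \<le> t (snd q)" "z = (f^^l) (cis (2 * pi * s))"
      unfolding arc_def by auto
    have "\<not> (t (fst q) \<le> t l \<and> t l \<le> t (snd q))" using that unfolding S_def by simp
    then show "\<rho> \<le> dist p z" using P2[OF s(1,2)] s(3) by simp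
  qed
  have sepl: "\<rho> \<le> hausdorff_dist ((f^^l) ` arc q) ((f^^l) ` arc q')"
    if "l \<in> S q" "l \<notin> S q'" "t (fst q') \<le> t (snd q')" for l q q'
  proof (rule hd_lower)
    show "(f^^l) ` arc q \<subseteq> S1" "(f^^l) ` arc q' \<subseteq> S1"
      using arcS iter_S1[OF fS'] by blast+
    show "(f^^l) ` arc q' \<noteq> {}" using arcNE[OF that(3)] by simp
    show "p \<in> (f^^l) ` arc q" by (rule P1[OF that(1)])
    show "\<forall>z\<in>(f^^l) ` arc q'. \<rho> \<le> dist p z" by (rule P2'[OF that(2)])
  qed
  have dist_l: "\<exists>l<n. (l \<in> S q \<and> l \<notin> S q') \<or> (l \<in> S q' \<and> l \<notin> S q)"
    if q: "q \<in> P n" "q' \<in> P n" "q \<noteq> q'" for n q q'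
  proof -
    obtain i j i' j' where qq: "q = (i, j)" "q' = (i', j')" by (cases q, cases q') auto
    have b: "i < n" "j < n" "t i < t j" "i' < n" "j' < n" "t i' < t j'" using q unfolding P_def qq by auto
    consider "t i < t i'" | "t i' < t i" | "t i = t i'" by linarith
    then show ?thesis
    proof cases
      case 1 then show ?thesis using b unfolding S_def qq by (intro exI[of _ i]) auto
    next
      case 2 then show ?thesis using b unfolding S_def qq by (intro exI[of _ i']) auto
    next
      case 3
      then have "i = i'" using tinj by blast
      then have "j \<noteq> j'" using q(3) qq by auto
      then have "t j \<noteq> t j'" using tinj by blast
      then consider "t j < t j'" | "t j' < t j" by linarith
      then show ?thesis
      proof cases
        case 1 then show ?thesis using b 3 unfolding S_def qq by (intro exI[of _ j']) auto
      next
        case 2 then show ?thesis using b 3 unfolding S_def qq by (intro exI[of _ j]) auto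
      qed
    qed
  qed
  have Pord: "t (fst q) \<le> t (snd q)" if "q \<in> P n" for q n using that unfolding P_def by auto
  have dyn: "\<rho> \<le> dyn_dist hausdorff_dist (Cmap f) n (arc q) (arc q')"
    if q: "q \<in> P n" "q' \<in> P n" "q \<noteq> q'" for n q q'
  proof -
    obtain l where l: "l < n" and lq: "(l \<in> S q \<and> l \<notin> S q') \<or> (l \<in> S q' \<and> l \<notin> S q)"
      using dist_l[OF q] by blast
    from lq have h: "\<rho> \<le> hausdorff_dist ((f^^l) ` arc q) ((f^^l) ` arc q')"
    proof
      assume "l \<in> S q \<and> l \<notin> S q'"
      then show ?thesis using sepl[of l q q'] Pord[OF q(2)] by blast
    next
      assume "l \<in> S q' \<and> l \<notin> S q"
      then have "\<rho> \<le> hausdorff_dist ((f^^l) ` arc q') ((f^^l) ` arc q)"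
        using sepl[of l q' q] Pord[OF q(1)] by blast
      then show ?thesis by (simp only: hd_sym)
    qed
    have "hausdorff_dist ((Cmap f ^^ l) (arc q)) ((Cmap f ^^ l) (arc q'))
        \<le> Max (insert 0 ((\<lambda>k. hausdorff_dist ((Cmap f ^^ k) (arc q)) ((Cmap f ^^ k) (arc q'))) ` {..<n}))"
      by (rule Max_ge) (use l in auto)
    then show ?thesis using h unfolding dyn_dist_def Cmap_iter by simp
  qed
  have arc_inj: "inj_on arc (P n)" for n
  proof (rule inj_onI, rule ccontr)
    fix q q' assume q: "q \<in> P n" "q' \<in> P n" "arc q = arc q'" "q \<noteq> q'"
    obtain l where "(l \<in> S q \<and> l \<notin> S q') \<or> (l \<in> S q' \<and> l \<notin> S q)"
      using dist_l[OF q(1,2,4)] by blast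
    then show False
    proof
      assume a: "l \<in> S q \<and> l \<notin> S q'"
      have "p \<in> (f^^l) ` arc q'" using P1[of l q] a q(3) by simp
      then obtain z where "z \<in> (f^^l) ` arc q'" "z = p" by blast
      then have "\<rho> \<le> dist p p" using P2'[of l q'] a by blast
      then show False using \<rho>(1) by simp
    next
      assume a: "l \<in> S q' \<and> l \<notin> S q"
      have "p \<in> (f^^l) ` arc q" using P1[of l q'] a q(3) by simp
      then obtain z where "z \<in> (f^^l) ` arc q" "z = p" by blast
      then have "\<rho> \<le> dist p p" using P2'[of l q] a by blast
      then show False using \<rho>(1) by simp
    qed
  qed
  have finP: "finite (P n)" for n
    by (rule finite_subset[of _ "{..<n} \<times> {..<n}"]) (auto simp: P_def)
  have sepE: "separated_set CS1 hausdorff_dist (Cmap f) n \<rho> (arc ` P n)" for n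
    unfolding separated_set_def
  proof (intro conjI ballI impI)
    show "finite (arc ` P n)" using finP by simp
    show "arc ` P n \<subseteq> CS1" using arcCS Pord by blast
    fix A A' assume A: "A \<in> arc ` P n" "A' \<in> arc ` P n" "A \<noteq> A'"
    then obtain q q' where "q \<in> P n" "q' \<in> P n" "A = arc q" "A' = arc q'" by blast
    moreover then have "q \<noteq> q'" using A(3) by blast
    ultimately show "\<rho> \<le> dyn_dist hausdorff_dist (Cmap f) n A A'" using dyn by blast
  qed
  have cardP: "real n * (real n - 1) / 2 \<le> real (card (P n))" for n
  proof -
    define D where "D = ({..<n} \<times> {..<n}) - (\<lambda>i. (i, i)) ` {..<n}"
    have "D \<subseteq> P n \<union> prod.swap ` P n"
    proof
      fix q assume "q \<in> D"
      then obtain i j where q: "q = (i, j)" "i < n" "j < n" "i \<noteq> j" unfolding D_def by auto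
      then have "t i < t j \<or> t j < t i" using tinj by (meson linorder_neqE_linordered_idom)
      then show "q \<in> P n \<union> prod.swap ` P n"
      proof
        assume "t i < t j" then show ?thesis using q unfolding P_def by auto
      next
        assume "t j < t i"
        then have "(j, i) \<in> P n" using q unfolding P_def by auto
        then have "prod.swap (j, i) \<in> prod.swap ` P n" by (rule imageI)
        then show ?thesis using q by simp
      qed
    qed
    then have "card D \<le> card (P n \<union> prod.swap ` P n)"
      by (rule card_mono[rotated]) (use finP in simp)
    also have "\<dots> \<le> card (P n) + card (prod.swap ` P n)" by (rule card_Un_le)
    also have "\<dots> \<le> 2 * card (P n)" using card_image_le[OF finP, of prod.swap n] by simp
    finally have c1: "card D \<le> 2 * card (P n)" .
    have "card ((\<lambda>i. (i, i)) ` {..<n}) = n" by (subst card_image) (auto simp: inj_on_def)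
    then have "card D = n * n - n" unfolding D_def
      by (subst card_Diff_subset) (auto simp: card_cartesian_product)
    moreover have "n \<le> n * n" by (cases n) auto
    ultimately have "real (card D) = real n * real n - real n" by (simp add: of_nat_diff)
    then have "real n * real n - real n \<le> 2 * real (card (P n))" using c1 by linarith
    then show ?thesis by (simp add: algebra_simps)
  qed
  have sep_low: "real n * (real n - 1) / 2 \<le> real (sep_num CS1 hausdorff_dist (Cmap f) n \<rho>)" for n
  proof -
    have "card (arc ` P n) \<le> sep_num CS1 hausdorff_dist (Cmap f) n \<rho>"
      by (rule sep_num_ge[OF fS' \<rho>(1) sepE])
    moreover have "card (arc ` P n) = card (P n)" by (rule card_image[OF arc_inj])
    ultimately show ?thesis using cardP[of n] by linarith
  qed
  define \<phi> where "\<phi> e = limsup (\<lambda>n. ereal (ln (real (sep_num CS1 hausdorff_dist (Cmap f) n e)) / ln (real n)))" for e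
  have mono: "\<phi> e \<le> \<phi> e'" if "0 < e'" "e' \<le> e" for e e'
    unfolding \<phi>_def
  proof (rule Limsup_mono[OF always_eventually], rule allI)
    fix n :: nat
    have "ln (real (sep_num CS1 hausdorff_dist (Cmap f) n e)) \<le> ln (real (sep_num CS1 hausdorff_dist (Cmap f) n e'))"
      by (rule ln_nat_mono[OF sep_num_mono[OF fS' that]])
    then show "ereal (ln (real (sep_num CS1 hausdorff_dist (Cmap f) n e)) / ln (real n))
        \<le> ereal (ln (real (sep_num CS1 hausdorff_dist (Cmap f) n e')) / ln (real n))"
      using ln_nat_nonneg[of n] by (simp add: divide_right_mono)
  qed
  have "2 \<le> \<phi> \<rho>" unfolding \<phi>_def by (rule limsup_ge2) (rule sep_low)
  then have "2 \<le> Lim (at_right 0) \<phi>"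
    by (intro Lim_antitone_ge[of \<phi> \<rho>]) (use mono \<rho>(1) in auto)
  then show ?thesis unfolding h_pol_def \<phi>_def by simp
qed


end
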